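(* Under the hypotheses of Proposition 7.3 (i.e., $M\in\mathbb{R}^{p\times q}_+$ with $\operatorname{rank}(M)=\binom{k+1}{2}$, $\operatorname{rank}_{\mathrm{psd}}(M)=k$, and $P,Q$ the cones built from a rank factorization $M=UV$ as below), the quotient spaces $\mathcal{SF}(M)/GL(k)$ and $\Delta_k(P,Q)/GL(k)$ are homeomorphic.
   Context: $\mathcal{S}^k$ is the space of real symmetric $k\times k$ matrices, $\mathcal{S}^k_+$ the psd cone, $\langle A,B\rangle=\operatorname{trace}(AB)$, $GL(k)$ the group of invertible real $k\times k$ matrices. Fix a rank factorization $M=UV$, $U\in\mathbb{R}^{p\times d}$, $V\in\mathbb{R}^{d\times q}$, $d=\binom{k+1}{2}$, with $u_i$ the $i$-th row of $U$ and $v_j$ the $j$-th column of $V$; $P=\operatorname{cone}(u_1,\dots,u_p)$, $Q=\{x\in\mathbb{R}^d: v_j^Tx\ge0\ \forall j\}$. $\mathcal{SF}(M)$ is the set of tuples $(A_1,\dots,A_p,B_1,\dots,B_q)$ of matrices in $\mathcal{S}^k_+$ with $M_{ij}=\langle A_i,B_j\rangle$, with the subspace topology of $(\mathcal{S}^k)^{p+q}$; $GL(k)$ acts by $L\cdot(A_1,\dots,B_q)=(L^TA_1L,\dots,L^TA_pL,L^{-1}B_1L^{-T},\dots,L^{-1}B_qL^{-T})$. $\Delta_k(P,Q)$ is the set of linear maps $\pi:\mathcal{S}^k\to\mathbb{R}^d$ with $P\subseteq\pi(\mathcal{S}^k_+)\subseteq Q$ (subspace topology), with $GL(k)$ acting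 by $(g\cdot\pi)(X)=\pi(gXg^T)$. Quotients carry the quotient topology. *)

theory Defs
  imports "HOL-Analysis.Analysis"
begin

definition psd_matrix :: "real^'k^'k \<Rightarrow> bool" where
  "psd_matrix A \<longleftrightarrow> transpose A = A \<and> (\<forall>x. 0 \<le> x \<bullet> (A *v x))"

definition trace_inner :: "real^'k^'k \<Rightarrow> real^'k^'k \<Rightarrow> real" where
  "trace_inner A B = trace (A ** B)"

text \<open>Size-m matrices as functions on indices below m (needed to quantify over the size m).\<close>
definition psd_nat :: "nat \<Rightarrow> (nat \<Rightarrow> nat \<Rightarrow> real) \<Rightarrow> bool" where
  "psd_nat m A \<longleftrightarrow> (\<forall>a<m. \<forall>b<m. A a b = A b a) \<and>
     (\<forall>x::nat \<Rightarrow> real. 0 \<le> (\<Sum>a<m. \<Sum>b<m. x a * A a b * x b))"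

definition has_psd_factorization :: "real^'q^'p \<Rightarrow> nat \<Rightarrow> bool" where
  "has_psd_factorization M m \<longleftrightarrow>
     (\<exists>A B. (\<forall>i. psd_nat m (A i)) \<and> (\<forall>j. psd_nat m (B j)) \<and>
        (\<forall>i j. M $ i $ j = (\<Sum>a<m. \<Sum>b<m. A i a b * B j b a)))"

definition psd_rank :: "real^'q^'p \<Rightarrow> nat" where
  "psd_rank M = (LEAST m. has_psd_factorization M m)"

definition quotient_topology :: "'a topology \<Rightarrow> ('a \<times> 'a) set \<Rightarrow> 'a set topology" where
  "quotient_topology X r =
     topology (\<lambda>U. U \<subseteq> topspace X // r \<and> openin X {x \<in> topspace X. r `` {x} \<in> U})"

definition cone_P :: "real^'d^'p \<Rightarrow> (real^'d) set" where
  "cone_P U = {x. \<exists>c::'p \<Rightarrow> real. (\<forall>i. 0 \<le> c i) \<and> x = (\<Sum>i\<in>UNIV. c i *\<^sub>R row i U)}"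

definition cone_Q :: "real^'q^'d \<Rightarrow> (real^'d) set" where
  "cone_Q V = {x. \<forall>j. 0 \<le> column j V \<bullet> x}"

definition SF :: "real^'q^'p \<Rightarrow> (((real^'k^'k)^'p) \<times> ((real^'k^'k)^'q)) set" where
  "SF M = {(A, B). (\<forall>i. psd_matrix (A $ i)) \<and> (\<forall>j. psd_matrix (B $ j)) \<and>
                   (\<forall>i j. M $ i $ j = trace_inner (A $ i) (B $ j))}"

definition GL_act_SF :: "real^'k^'k \<Rightarrow> ((real^'k^'k)^'p) \<times> ((real^'k^'k)^'q)
                          \<Rightarrow> ((real^'k^'k)^'p) \<times> ((real^'k^'k)^'q)" where
  "GL_act_SF L AB = ((\<chi> i. transpose L ** (fst AB $ i) ** L),
                     (\<chi> j. matrix_inv L ** (snd AB $ j) ** transpose (matrix_inv L)))"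

definition SF_orbit_rel :: "real^'q^'p \<Rightarrow> ((((real^'k^'k)^'p) \<times> ((real^'k^'k)^'q)) \<times>
                                              (((real^'k^'k)^'p) \<times> ((real^'k^'k)^'q))) set" where
  "SF_orbit_rel M = {(x, y). x \<in> SF M \<and> y \<in> SF M \<and> (\<exists>L. invertible L \<and> y = GL_act_SF L x)}"

definition SF_quotient :: "real^'q^'p \<Rightarrow> (((real^'k^'k)^'p) \<times> ((real^'k^'k)^'q)) set topology" where
  "SF_quotient M = quotient_topology (subtopology euclidean (SF M)) (SF_orbit_rel M)"

text \<open>Linear maps S^k \<rightarrow> R^d are represented by (bounded) linear maps on all k\<times>k matrices
  that are invariant under transposition, i.e. that factor through the symmetrization
  X \<mapsto> (X + X^T)/2 onto S^k; this is a linear homeomorphism onto Hom(S^k, R^d).\<close>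
definition Delta :: "real^'d^'p \<Rightarrow> real^'q^'d \<Rightarrow> ((real^'k^'k) \<Rightarrow>\<^sub>L (real^'d)) set" where
  "Delta U V = {\<pi>. (\<forall>X. blinfun_apply \<pi> (transpose X) = blinfun_apply \<pi> X) \<and>
                    cone_P U \<subseteq> blinfun_apply \<pi> ` {X. psd_matrix X} \<and>
                    blinfun_apply \<pi> ` {X. psd_matrix X} \<subseteq> cone_Q V}"

definition Delta_orbit_rel :: "real^'d^'p \<Rightarrow> real^'q^'d \<Rightarrow>
     (((real^'k^'k) \<Rightarrow>\<^sub>L (real^'d)) \<times> ((real^'k^'k) \<Rightarrow>\<^sub>L (real^'d))) set" where
  "Delta_orbit_rel U V = {(\<pi>, \<pi>'). \<pi> \<in> Delta U V \<and> \<pi>' \<in> Delta U V \<and>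
      (\<exists>g. invertible g \<and> (\<forall>X. blinfun_apply \<pi>' X = blinfun_apply \<pi> (g ** X ** transpose g)))}"

definition Delta_quotient :: "real^'d^'p \<Rightarrow> real^'q^'d \<Rightarrow> ((real^'k^'k) \<Rightarrow>\<^sub>L (real^'d)) set topology" where
  "Delta_quotient U V = quotient_topology (subtopology euclidean (Delta U V)) (Delta_orbit_rel U V)"

end

theory Submission
  imports Defs
begin


lemma istopology_quot: "istopology (\<lambda>U. U \<subseteq> topspace X // r \<and> openin X {x \<in> topspace X. r `` {x} \<in> U})"
  unfolding istopology_def
proof (rule conjI; intro allI impI)
  fix S T assume a: "(S \<subseteq> topspace X // r \<and> openin X {x \<in> topspace X. r `` {x} \<in> S})" "(T \<subseteq> topspace X // r \<and> openin X {x \<in> topspace X. r `` {x} \<in> T})"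
  then show "S \<inter> T \<subseteq> topspace X // r \<and> openin X {x \<in> topspace X. r `` {x} \<in> S \<inter> T}"
  proof -
    have "{x \<in> topspace X. r `` {x} \<in> S \<inter> T} = {x \<in> topspace X. r `` {x} \<in> S} \<inter> {x \<in> topspace X. r `` {x} \<in> T}" by auto
    then show ?thesis using a by (auto intro: openin_Int)
  qed
next
  fix K assume K: "\<forall>S\<in>K. S \<subseteq> topspace X // r \<and> openin X {x \<in> topspace X. r `` {x} \<in> S}"
  have "{x \<in> topspace X. r `` {x} \<in> \<Union>K} = (\<Union>S\<in>K. {x \<in> topspace X. r `` {x} \<in> S})" by auto
  then show "\<Union>K \<subseteq> topspace X // r \<and> openin X {x \<in> topspace X. r `` {x} \<in> \<Union>K}"
    using K by auto
qed

lemma openin_quot: "openin (quotient_topology X r) U \<longleftrightarrow> U \<subseteq> topspace X // r \<and> openin X {x \<in> topspace X. r `` {x} \<in> U}"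
  unfolding quotient_topology_def using istopology_quot[of X r] by (simp add: topology_inverse')

lemma topspace_quot: "topspace (quotient_topology X r) = topspace X // r"
proof -
  have "{x \<in> topspace X. r `` {x} \<in> topspace X // r} = topspace X"
    by (auto simp: quotient_def)
  then have "openin (quotient_topology X r) (topspace X // r)" by (simp add: openin_quot)
  then have "topspace X // r \<subseteq> topspace (quotient_topology X r)" by (rule openin_subset)
  moreover have "topspace (quotient_topology X r) \<subseteq> topspace X // r"
    using openin_topspace[of "quotient_topology X r"] by (simp only: openin_quot)
  ultimately show ?thesis by blast
qed

lemma quot_half:
  assumes hm: "homeomorphic_maps X Y f g"
    and rs: "r \<subseteq> topspace X \<times> topspace X" "s \<subseteq> topspace Y \<times> topspace Y"
    and iff: "\<forall>x\<in>topspace X. \<forall>x'\<in>topspace X. (x,x') \<in> r \<longleftrightarrow> (f x, f x') \<in> s"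
  shows "\<forall>x\<in>topspace X. f ` (r``{x}) = s``{f x}"
    and "continuous_map (quotient_topology X r) (quotient_topology Y s) ((`) f)"
proof -
  have cf: "continuous_map X Y f" and cg: "continuous_map Y X g"
    and fg: "\<forall>y\<in>topspace Y. f (g y) = y"
    using hm unfolding homeomorphic_maps_def by blast+
  have fX: "f ` topspace X \<subseteq> topspace Y" and gY: "g ` topspace Y \<subseteq> topspace X"
    using continuous_map_image_subset_topspace[OF cf] continuous_map_image_subset_topspace[OF cg] by auto
  show cls: "\<forall>x\<in>topspace X. f ` (r``{x}) = s``{f x}"
  proof (intro ballI equalityI subsetI)
    fix x y assume x: "x \<in> topspace X" and "y \<in> f ` (r``{x})"
    then obtain z where "(x,z) \<in> r" "y = f z" by auto
    then show "y \<in> s``{f x}" using iff rs x by auto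
  next
    fix x z assume x: "x \<in> topspace X" and "z \<in> s``{f x}"
    then have zs: "(f x, z) \<in> s" by auto
    then have z: "z \<in> topspace Y" using rs by auto
    then have "(f x, f (g z)) \<in> s" using fg zs by auto
    then have "(x, g z) \<in> r" using iff x gY z by auto
    then show "z \<in> f ` (r``{x})" using fg z by force
  qed
  show "continuous_map (quotient_topology X r) (quotient_topology Y s) ((`) f)"
    unfolding continuous_map_def topspace_quot
  proof (intro conjI)
    show "(`) f \<in> topspace X // r \<rightarrow> topspace Y // s"
    proof
      fix C assume "C \<in> topspace X // r"
      then obtain x where x: "x \<in> topspace X" "C = r``{x}" by (auto elim: quotientE)
      then have "f ` C = s``{f x}" using cls by auto
      then show "f ` C \<in> topspace Y // s" using fX x by (auto intro: quotientI)
    qed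
    show "\<forall>U. openin (quotient_topology Y s) U \<longrightarrow>
        openin (quotient_topology X r) {x \<in> topspace X // r. f ` x \<in> U}"
    proof (intro allI impI)
      fix U assume "openin (quotient_topology Y s) U"
      then have U: "openin Y {y \<in> topspace Y. s `` {y} \<in> U}" by (simp add: openin_quot)
      have eq: "{x \<in> topspace X. r `` {x} \<in> {x \<in> topspace X // r. f ` x \<in> U}}
          = {x \<in> topspace X. f x \<in> {y \<in> topspace Y. s `` {y} \<in> U}}"
      proof (rule set_eqI, rule iffI)
        fix x assume "x \<in> {x \<in> topspace X. r `` {x} \<in> {x \<in> topspace X // r. f ` x \<in> U}}"
        then have x: "x \<in> topspace X" "f ` (r``{x}) \<in> U" by auto
        then show "x \<in> {x \<in> topspace X. f x \<in> {y \<in> topspace Y. s `` {y} \<in> U}}"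
          using cls fX by auto
      next
        fix x assume "x \<in> {x \<in> topspace X. f x \<in> {y \<in> topspace Y. s `` {y} \<in> U}}"
        then have x: "x \<in> topspace X" "s``{f x} \<in> U" by auto
        then have "r``{x} \<in> topspace X // r" by (simp add: quotientI)
        then show "x \<in> {x \<in> topspace X. r `` {x} \<in> {x \<in> topspace X // r. f ` x \<in> U}}"
          using cls x by auto
      qed
      show "openin (quotient_topology X r) {x \<in> topspace X // r. f ` x \<in> U}"
        unfolding openin_quot eq using openin_continuous_map_preimage[OF cf U] by auto
    qed
  qed
qed

lemma quot_homeo:
  assumes hm: "homeomorphic_maps X Y f g"
    and rs: "r \<subseteq> topspace X \<times> topspace X" "s \<subseteq> topspace Y \<times> topspace Y"
    and iff: "\<forall>x\<in>topspace X. \<forall>x'\<in>topspace X. (x,x') \<in> r \<longleftrightarrow> (f x, f x') \<in> s"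
  shows "quotient_topology X r homeomorphic_space quotient_topology Y s"
proof -
  have hm': "homeomorphic_maps Y X g f" using hm homeomorphic_maps_sym by blast
  have cf: "continuous_map X Y f" and cg: "continuous_map Y X g"
    and fg: "\<forall>y\<in>topspace Y. f (g y) = y" and gf: "\<forall>x\<in>topspace X. g (f x) = x"
    using hm unfolding homeomorphic_maps_def by blast+
  have fX: "f ` topspace X \<subseteq> topspace Y" and gY: "g ` topspace Y \<subseteq> topspace X"
    using continuous_map_image_subset_topspace[OF cf] continuous_map_image_subset_topspace[OF cg] by auto
  have iff': "\<forall>y\<in>topspace Y. \<forall>y'\<in>topspace Y. (y,y') \<in> s \<longleftrightarrow> (g y, g y') \<in> r"
  proof (intro ballI)
    fix y y' assume y: "y \<in> topspace Y" "y' \<in> topspace Y"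
    then have "g y \<in> topspace X" "g y' \<in> topspace X" using gY by auto
    then have "(g y, g y') \<in> r \<longleftrightarrow> (f (g y), f (g y')) \<in> s" using iff by blast
    then show "(y,y') \<in> s \<longleftrightarrow> (g y, g y') \<in> r" using fg y by simp
  qed
  note A = quot_half[OF hm rs iff] and B = quot_half[OF hm' rs(2,1) iff']
  show ?thesis unfolding homeomorphic_space_def homeomorphic_maps_def
  proof (intro exI conjI)
    show "continuous_map (quotient_topology X r) (quotient_topology Y s) ((`) f)" by (rule A(2))
    show "continuous_map (quotient_topology Y s) (quotient_topology X r) ((`) g)" by (rule B(2))
    show "\<forall>x\<in>topspace (quotient_topology X r). g ` f ` x = x"
      unfolding topspace_quot
    proof
      fix C assume "C \<in> topspace X // r"
      then obtain x where x: "x \<in> topspace X" "C = r``{x}" by (auto elim: quotientE)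
      have fx: "f x \<in> topspace Y" using fX x by auto
      have "g ` f ` C = g ` (s``{f x})" using A(1) x by simp
      also have "\<dots> = r``{g (f x)}" using B(1) fx by simp
      finally show "g ` f ` C = C" using gf x by simp
    qed
    show "\<forall>y\<in>topspace (quotient_topology Y s). f ` g ` y = y"
      unfolding topspace_quot
    proof
      fix C assume "C \<in> topspace Y // s"
      then obtain y where y: "y \<in> topspace Y" "C = s``{y}" by (auto elim: quotientE)
      have gy: "g y \<in> topspace X" using gY y by auto
      have "f ` g ` C = f ` (r``{g y})" using B(1) y by simp
      also have "\<dots> = s``{f (g y)}" using A(1) gy by simp
      finally show "f ` g ` C = C" using fg y by simp
    qed
  qed
qed


lemma sum2_delta: fixes i :: "'a::finite" and j :: "'b::finite" shows "(\<Sum>x\<in>UNIV. \<Sum>y\<in>UNIV. if i = x \<and> j = y then f x y else 0) = (f i j :: real)"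
proof -
  have "(\<Sum>x\<in>UNIV. \<Sum>y\<in>UNIV. if i = x \<and> j = y then f x y else 0) = (\<Sum>x\<in>UNIV. if i = x then f x j else 0)"
    by (rule sum.cong[OF refl]) (auto simp: sum.delta sum.delta')
  then show ?thesis by (simp add: sum.delta sum.delta')
qed

lemma sum2_delta': fixes i :: "'a::finite" and j :: "'b::finite" shows "(\<Sum>x\<in>UNIV. \<Sum>y\<in>UNIV. if x = i \<and> y = j then f x y else 0) = (f i j :: real)"
  using sum2_delta[of i j f] by (simp add: eq_commute)

definition Emat :: "'k \<Rightarrow> 'k \<Rightarrow> real^'k^'k" where
  "Emat a b = (\<chi> i j. if i = a \<and> j = b then 1 else 0)"

lemma mat_decomp: "(X::real^'k^'k) = (\<Sum>a\<in>UNIV. \<Sum>b\<in>UNIV. X$a$b *\<^sub>R Emat a b)"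
  by (simp add: vec_eq_iff Emat_def if_distrib[of "\<lambda>x. _ * x"] sum2_delta cong: if_cong)

lemma blin_decomp: "blinfun_apply \<pi> (X::real^'k^'k) = (\<Sum>a\<in>UNIV. \<Sum>b\<in>UNIV. X$a$b *\<^sub>R blinfun_apply \<pi> (Emat a b))"
  by (subst mat_decomp) (simp add: blinfun.sum_right blinfun.scaleR_right)

lemma trace_inner_expand: "trace_inner X B = (\<Sum>a\<in>UNIV. \<Sum>b\<in>UNIV. X$a$b * B$b$a)"
  by (simp add: trace_inner_def trace_def matrix_matrix_mult_def)

lemma transpose_Emat: "transpose (Emat a b) = Emat b a"
  by (auto simp: vec_eq_iff Emat_def transpose_def)

lemma trace_inner_Emat: "trace_inner (Emat a b) B = B$b$a"
  by (simp add: trace_inner_expand Emat_def if_distrib[of "\<lambda>x. x * _"] sum2_delta' cong: if_cong)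


lemma qf_expand: "x \<bullet> ((B::real^'k^'k) *v x) = (\<Sum>i\<in>UNIV. \<Sum>j\<in>UNIV. x$i * B$i$j * x$j)"
  by (simp add: inner_vec_def matrix_vector_mult_def sum_distrib_left mult.assoc)

lemma axis_qf: "axis a 1 \<bullet> ((B::real^'k^'k) *v axis b 1) = B$a$b"
  by (simp add: matrix_vector_mult_basis inner_axis' column_def)

lemma qf_two: "(s *\<^sub>R axis a 1 + t *\<^sub>R axis b 1) \<bullet> ((B::real^'k^'k) *v (s *\<^sub>R axis a 1 + t *\<^sub>R axis b 1))
   = s * s * B$a$a + s * t * B$a$b + t * s * B$b$a + t * t * B$b$b"
  by (simp add: matrix_vector_right_distrib inner_add_left inner_add_right axis_qf
      matrix_vector_mult_scaleR algebra_simps)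

lemma psd_sym: "psd_matrix B \<Longrightarrow> B$i$j = B$j$i"
  unfolding psd_matrix_def by (metis transpose_def vec_lambda_beta)

lemma psd_diag: "psd_matrix B \<Longrightarrow> 0 \<le> B$a$a"
  unfolding psd_matrix_def using axis_qf[of a B a] by metis

lemma psd_zero_diag: assumes "psd_matrix B" "B$a$a = 0" shows "B$a$b = 0"
proof (rule ccontr)
  assume ne: "B$a$b \<noteq> 0"
  then have ab: "a \<noteq> b" using assms by auto
  define s where "s = - (B$b$b + 1) / (2 * B$a$b)"
  have "0 \<le> (s *\<^sub>R axis a 1 + 1 *\<^sub>R axis b 1) \<bullet> (B *v (s *\<^sub>R axis a 1 + 1 *\<^sub>R axis b 1))"
    using assms unfolding psd_matrix_def by blast
  also have "\<dots> = s * 1 * B$a$b + 1 * s * B$b$a + B$b$b" unfolding qf_two using assms by simp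
  also have "\<dots> = 2 * s * B$a$b + B$b$b" using psd_sym[OF assms(1), of a b] by simp
  also have "\<dots> = -1" using ne by (simp add: s_def field_simps)
  finally show False by simp
qed

definition outer :: "real^'k \<Rightarrow> real^'k^'k" where
  "outer c = (\<chi> i j. c$i * c$j)"

lemma outer_qf: "x \<bullet> (outer c *v x) = (c \<bullet> x)^2"
  by (simp add: outer_def inner_vec_def matrix_vector_mult_def power2_eq_square
      sum_product sum_distrib_left mult.assoc mult.left_commute mult.commute)

lemma trace_inner_outer: "trace_inner X (outer c) = c \<bullet> (X *v c)"
  by (simp add: trace_inner_expand outer_def inner_vec_def matrix_vector_mult_def
      sum_distrib_left mult.assoc mult.left_commute mult.commute)

lemma trace_inner_add2: "trace_inner X (B + C) = trace_inner X B + trace_inner X C"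
  by (simp add: trace_inner_expand algebra_simps sum.distrib)

lemma trace_inner_scale2: "trace_inner X (r *\<^sub>R B) = r * trace_inner X B"
  by (simp add: trace_inner_expand sum_distrib_left mult.left_commute)

lemma psd_outer: "psd_matrix (outer c)"
proof -
  have "transpose (outer c) = outer c" by (auto simp: outer_def transpose_def vec_eq_iff mult.commute)
  then show ?thesis unfolding psd_matrix_def by (simp add: outer_qf)
qed

lemma scaleR_mv: "(r *\<^sub>R (A::real^'n^'m)) *v x = r *\<^sub>R (A *v x)"
  by (simp add: vec_eq_iff matrix_vector_mult_def sum_distrib_left mult.assoc)

lemma psd_schur:
  assumes B: "psd_matrix B" and pos: "B$a$a > 0"
  shows "psd_matrix (B - (1 / B$a$a) *\<^sub>R outer (column a B))"
proof -
  let ?c = "column a B"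
  have tr: "transpose (B - (1 / B$a$a) *\<^sub>R outer ?c) = B - (1 / B$a$a) *\<^sub>R outer ?c"
    using B psd_sym[OF B] by (auto simp: transpose_def vec_eq_iff outer_def mult.commute)
  have q: "0 \<le> x \<bullet> ((B - (1 / B$a$a) *\<^sub>R outer ?c) *v x)" for x
  proof -
    define t where "t = - (?c \<bullet> x) / B$a$a"
    have e1: "x \<bullet> (B *v axis a 1) = ?c \<bullet> x"
      by (simp add: matrix_vector_mult_basis inner_commute)
    have e2: "axis a 1 \<bullet> (B *v x) = ?c \<bullet> x"
    proof -
      have "(B *v x)$a = (\<Sum>j\<in>UNIV. B$j$a * x$j)"
        unfolding matrix_vector_mult_def vec_lambda_beta by (rule sum.cong) (auto simp: psd_sym[OF B, of a])
      moreover have "axis a 1 \<bullet> (B *v x) = (B *v x)$a" by (simp add: inner_axis')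
      ultimately show ?thesis by (simp add: inner_vec_def column_def)
    qed
    have "0 \<le> (x + t *\<^sub>R axis a 1) \<bullet> (B *v (x + t *\<^sub>R axis a 1))"
      using B unfolding psd_matrix_def by blast
    also have "\<dots> = x \<bullet> (B *v x) + 2 * t * (?c \<bullet> x) + t * t * B$a$a"
      by (simp add: matrix_vector_right_distrib inner_add_left inner_add_right
          matrix_vector_mult_scaleR e1 e2 axis_qf algebra_simps)
    also have "\<dots> = x \<bullet> (B *v x) - (?c \<bullet> x)^2 / B$a$a"
      using pos by (simp add: t_def field_simps power2_eq_square)
    also have "\<dots> = x \<bullet> ((B - (1 / B$a$a) *\<^sub>R outer ?c) *v x)"
      by (simp add: matrix_vector_mult_diff_rdistrib inner_diff_right outer_qf
          scaleR_mv)
    finally show ?thesis .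
  qed
  show ?thesis unfolding psd_matrix_def using tr q by blast
qed

lemma psd_trace_nonneg:
  assumes X: "psd_matrix (X::real^'k^'k)"
  shows "psd_matrix B \<Longrightarrow> 0 \<le> trace_inner X B"
proof (induction "card {i. B$i$i \<noteq> 0}" arbitrary: B rule: less_induct)
  case (less B)
  show ?case
  proof (cases "\<forall>i. B$i$i = 0")
    case True
    then have "B = 0" using psd_zero_diag[OF less.prems] by (auto simp: vec_eq_iff)
    then show ?thesis by (simp add: trace_inner_expand)
  next
    case False
    then obtain a where a: "B$a$a \<noteq> 0" by blast
    have pos: "B$a$a > 0" using psd_diag[OF less.prems, of a] a by simp
    define c where "c = column a B"
    define B' where "B' = B - (1 / B$a$a) *\<^sub>R outer c"
    have B'psd: "psd_matrix B'" unfolding B'_def c_def by (rule psd_schur[OF less.prems pos])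
    have diag: "B'$i$i = B$i$i - (B$i$a)^2 / B$a$a" for i
      by (simp add: B'_def c_def outer_def column_def power2_eq_square)
    have sub: "{i. B'$i$i \<noteq> 0} \<subset> {i. B$i$i \<noteq> 0}"
    proof
      show "{i. B'$i$i \<noteq> 0} \<subseteq> {i. B$i$i \<noteq> 0}"
        using psd_zero_diag[OF less.prems] diag by auto
      have "B'$a$a = 0" using diag[of a] pos by (simp add: power2_eq_square)
      then show "{i. B'$i$i \<noteq> 0} \<noteq> {i. B$i$i \<noteq> 0}" using a by blast
    qed
    then have "card {i. B'$i$i \<noteq> 0} < card {i. B$i$i \<noteq> 0}"
      by (simp add: psubset_card_mono)
    then have ih: "0 \<le> trace_inner X B'" using less.hyps B'psd by blast
    have eq: "B = B' + (1 / B$a$a) *\<^sub>R outer c" by (simp add: B'_def)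
    have "trace_inner X B = trace_inner X (B' + (1 / B$a$a) *\<^sub>R outer c)"
      using eq by (rule arg_cong)
    also have "\<dots> = trace_inner X B' + (1 / B$a$a) * (c \<bullet> (X *v c))"
      by (simp only: trace_inner_add2 trace_inner_scale2 trace_inner_outer)
    finally have "trace_inner X B = trace_inner X B' + (1 / B$a$a) * (c \<bullet> (X *v c))" .
    moreover have "0 \<le> c \<bullet> (X *v c)" using X unfolding psd_matrix_def by blast
    ultimately show ?thesis using ih pos by simp
  qed
qed


lemma sum2_delta_sw: fixes i :: "'a::finite" and j :: "'b::finite"
  shows "(\<Sum>x\<in>UNIV. \<Sum>y\<in>UNIV. if i = y \<and> j = x then f x y else 0) = (f j i :: real)"
  by (subst sum.swap) (rule sum2_delta)

definition symset :: "'k set \<Rightarrow> real^'k^'k" where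
  "symset T = (\<chi> i j. if {i, j} = T then 1 else 0)"

definition pairs :: "'k set set" where "pairs = {T. \<exists>a b. T = {a, b}}"

lemma card_pairs: "card (pairs :: 'k::finite set set) = (CARD('k) + 1) choose 2"
proof -
  have eq: "(pairs :: 'k set set) = {T. T \<subseteq> UNIV \<and> card T = 1} \<union> {T. T \<subseteq> UNIV \<and> card T = 2}"
    unfolding pairs_def by (auto simp: card_1_singleton_iff card_2_iff)
  have "card (pairs :: 'k set set) = card {T::'k set. T \<subseteq> UNIV \<and> card T = 1} + card {T::'k set. T \<subseteq> UNIV \<and> card T = 2}"
    unfolding eq by (rule card_Un_disjoint) auto
  also have "\<dots> = (CARD('k) choose 1) + (CARD('k) choose 2)"
    using n_subsets[of "UNIV::'k set" 1] n_subsets[of "UNIV::'k set" 2] by simp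
  also have "\<dots> = (CARD('k) + 1) choose 2"
    using binomial_Suc_Suc[of "CARD('k)" 1] by (simp add: numeral_2_eq_2)
  finally show ?thesis .
qed

lemma transpose_decomp: "transpose (X::real^'k^'k) = (\<Sum>a\<in>UNIV. \<Sum>b\<in>UNIV. X$a$b *\<^sub>R Emat b a)"
  by (simp add: vec_eq_iff Emat_def transpose_def if_distrib[of "\<lambda>x. _ * x"] sum2_delta_sw cong: if_cong)

lemma Emat_pair: "Emat a b + Emat b a = (if a = b then 2 else 1) *\<^sub>R symset {a, b}"
  by (auto simp: vec_eq_iff Emat_def symset_def doubleton_eq_iff)

lemma sym_in_span: assumes "transpose X = X"
  shows "(X::real^'k^'k) \<in> span (symset ` pairs)"
proof -
  have "X = (1/2) *\<^sub>R (X + transpose X)" using assms by (simp add: scaleR_2[symmetric])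
  also have "\<dots> = (1/2) *\<^sub>R (\<Sum>a\<in>UNIV. \<Sum>b\<in>UNIV. X$a$b *\<^sub>R (Emat a b + Emat b a))"
  proof -
    have "(\<Sum>a\<in>UNIV. \<Sum>b\<in>UNIV. X$a$b *\<^sub>R (Emat a b + Emat b a)) =
      (\<Sum>a\<in>UNIV. \<Sum>b\<in>UNIV. X$a$b *\<^sub>R Emat a b) + (\<Sum>a\<in>UNIV. \<Sum>b\<in>UNIV. X$a$b *\<^sub>R Emat b a)"
      by (simp add: sum.distrib scaleR_add_right)
    also have "\<dots> = X + transpose X" using mat_decomp[of X, symmetric] transpose_decomp[of X, symmetric] by simp
    finally show ?thesis by simp
  qed
  also have "\<dots> \<in> span (symset ` pairs)"
  proof (rule span_scale, rule span_sum, rule span_sum)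
    fix a b :: 'k
    have "symset {a, b} \<in> span (symset ` pairs)" by (rule span_base) (auto simp: pairs_def)
    then show "X$a$b *\<^sub>R (Emat a b + Emat b a) \<in> span (symset ` pairs)"
      unfolding Emat_pair by (intro span_scale)
  qed
  finally show ?thesis .
qed

lemma dim_sym: "dim {X::real^'k^'k. transpose X = X} \<le> (CARD('k) + 1) choose 2"
proof -
  have "dim {X::real^'k^'k. transpose X = X} \<le> card (symset ` (pairs :: 'k set set))"
    by (rule dim_le_card) (auto intro: sym_in_span)
  also have "\<dots> \<le> card (pairs :: 'k set set)" by (rule card_image_le) simp
  finally show ?thesis by (simp add: card_pairs)
qed


lemma inner_sum2_scale: "(c::real^'d) \<bullet> (\<Sum>a\<in>UNIV. \<Sum>b\<in>UNIV. f a b *\<^sub>R g a b) = (\<Sum>a\<in>UNIV. \<Sum>b\<in>UNIV. f a b * (c \<bullet> g a b))"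
  by (simp add: inner_sum_right)

definition Bof :: "real^'q^'d \<Rightarrow> ((real^'k^'k) \<Rightarrow>\<^sub>L (real^'d)) \<Rightarrow> (real^'k^'k)^'q" where
  "Bof V \<pi> = (\<chi> j. \<chi> b a. column j V \<bullet> blinfun_apply \<pi> (Emat a b))"

lemma trace_Bof: "trace_inner X (Bof V \<pi> $ j) = column j V \<bullet> blinfun_apply \<pi> X"
  by (subst blin_decomp) (simp add: trace_inner_expand Bof_def inner_sum2_scale)

lemma qf_trace: "x \<bullet> (B *v x) = trace_inner (outer x) B"
proof -
  have "x \<bullet> (B *v x) = (\<Sum>a\<in>UNIV. \<Sum>b\<in>UNIV. x$a * x$b * B$a$b)"
    by (simp add: inner_vec_def matrix_vector_mult_def sum_distrib_left mult.assoc mult.left_commute mult.commute)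
  also have "\<dots> = (\<Sum>b\<in>UNIV. \<Sum>a\<in>UNIV. x$a * x$b * B$a$b)" by (rule sum.swap)
  also have "\<dots> = trace_inner (outer x) B"
    by (simp add: trace_inner_expand outer_def mult.commute)
  finally show ?thesis .
qed

lemma Delta_transpose: "\<pi> \<in> Delta U V \<Longrightarrow> blinfun_apply \<pi> (transpose X) = blinfun_apply \<pi> X"
  by (simp add: Delta_def)

lemma Delta_Emat: "\<pi> \<in> Delta U V \<Longrightarrow> blinfun_apply \<pi> (Emat b a) = blinfun_apply \<pi> (Emat a b)"
  by (metis Delta_transpose transpose_Emat)

lemma Delta_Q: "\<pi> \<in> Delta U V \<Longrightarrow> psd_matrix X \<Longrightarrow> 0 \<le> column j V \<bullet> blinfun_apply \<pi> X"
  unfolding Delta_def cone_Q_def by blast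

lemma psd_Bof: assumes "\<pi> \<in> Delta U V" shows "psd_matrix (Bof V \<pi> $ j)"
  unfolding psd_matrix_def
proof
  show "transpose (Bof V \<pi> $ j) = Bof V \<pi> $ j"
    by (simp add: vec_eq_iff transpose_def Bof_def; metis Delta_Emat[OF assms])
  show "\<forall>x. 0 \<le> x \<bullet> (Bof V \<pi> $ j *v x)"
    using Delta_Q[OF assms psd_outer] by (simp add: qf_trace trace_Bof)
qed

lemma cone_P_row: "row i U \<in> cone_P U"
  unfolding cone_P_def
  by (rule CollectI, rule exI[of _ "\<lambda>i'. if i' = i then 1 else 0"]) (simp add: if_distrib[of "\<lambda>c. c *\<^sub>R _"] cong: if_cong)

lemma Delta_row: assumes "\<pi> \<in> Delta U V" obtains X where "psd_matrix X" "row i U = blinfun_apply \<pi> X"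
  using assms cone_P_row[of i U] unfolding Delta_def by blast

definition Nmat :: "((real^'k^'k) \<Rightarrow>\<^sub>L (real^'d)) \<Rightarrow> real^'d^'d" where
  "Nmat \<pi> = (\<chi> m m'. \<Sum>a\<in>UNIV. \<Sum>b\<in>UNIV. blinfun_apply \<pi> (Emat a b) $ m * blinfun_apply \<pi> (Emat a b) $ m')"

lemma sum3_swap: "(\<Sum>x\<in>A. \<Sum>y\<in>B. \<Sum>z\<in>C. f x y z) = (\<Sum>y\<in>B. \<Sum>z\<in>C. \<Sum>x\<in>A. f x y z)"
  by (subst sum.swap, rule sum.cong[OF refl], rule sum.swap)

lemma Nmat_mult: "Nmat \<pi> *v y = (\<Sum>a\<in>UNIV. \<Sum>b\<in>UNIV. (blinfun_apply \<pi> (Emat a b) \<bullet> y) *\<^sub>R blinfun_apply \<pi> (Emat a b))"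
proof -
  have "(Nmat \<pi> *v y) $ m = (\<Sum>a\<in>UNIV. \<Sum>b\<in>UNIV. (blinfun_apply \<pi> (Emat a b) \<bullet> y) * blinfun_apply \<pi> (Emat a b) $ m)" for m
  proof -
    have "(Nmat \<pi> *v y) $ m = (\<Sum>m'\<in>UNIV. \<Sum>a\<in>UNIV. \<Sum>b\<in>UNIV. blinfun_apply \<pi> (Emat a b) $ m' * y $ m' * blinfun_apply \<pi> (Emat a b) $ m)"
      by (simp add: Nmat_def matrix_vector_mult_def sum_distrib_left sum_distrib_right mult.commute mult.left_commute)
    also have "\<dots> = (\<Sum>a\<in>UNIV. \<Sum>b\<in>UNIV. \<Sum>m'\<in>UNIV. blinfun_apply \<pi> (Emat a b) $ m' * y $ m' * blinfun_apply \<pi> (Emat a b) $ m)"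
      by (rule sum3_swap)
    also have "\<dots> = (\<Sum>a\<in>UNIV. \<Sum>b\<in>UNIV. (blinfun_apply \<pi> (Emat a b) \<bullet> y) * blinfun_apply \<pi> (Emat a b) $ m)"
      by (simp add: inner_vec_def sum_distrib_right)
    finally show ?thesis .
  qed
  then show ?thesis by (simp add: vec_eq_iff)
qed

lemma Nmat_qf: "y \<bullet> (Nmat \<pi> *v y) = (\<Sum>a\<in>UNIV. \<Sum>b\<in>UNIV. (blinfun_apply \<pi> (Emat a b) \<bullet> y)^2)"
  by (simp add: Nmat_mult inner_sum_right power2_eq_square inner_commute)

lemma mv_row: "(U *v y) $ i = row i U \<bullet> y"
  by (simp add: matrix_vector_mult_def row_def inner_vec_def)

lemma Nmat_det:
  fixes \<pi> :: "(real^'k^'k) \<Rightarrow>\<^sub>L (real^'d)"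
  assumes D: "\<pi> \<in> Delta U V" and injU: "inj ((*v) U)"
  shows "det (Nmat \<pi>) \<noteq> 0"
proof -
  have ker: "y = 0" if Ny: "Nmat \<pi> *v y = 0" for y
  proof -
    have "y \<bullet> (Nmat \<pi> *v y) = 0" using Ny by simp
    then have "(\<Sum>a\<in>UNIV. \<Sum>b\<in>UNIV. (blinfun_apply \<pi> (Emat a b) \<bullet> y)^2) = 0" by (simp add: Nmat_qf)
    then have z: "\<forall>a b. blinfun_apply \<pi> (Emat a b) \<bullet> y = 0"
      by (simp add: sum_nonneg_eq_0_iff sum_nonneg)
    have pz: "blinfun_apply \<pi> X \<bullet> y = 0" for X
      by (subst blin_decomp) (simp add: inner_sum_left z)
    have "U *v y = 0"
    proof -
      have "(U *v y) $ i = 0" for i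
      proof -
        obtain X where "row i U = blinfun_apply \<pi> X" using Delta_row[OF D] by metis
        then show ?thesis by (simp add: mv_row pz)
      qed
      then show ?thesis by (simp add: vec_eq_iff)
    qed
    then show "y = 0" using injU by (metis injD matrix_vector_mult_0_right)
  qed
  have injN: "inj ((*v) (Nmat \<pi>))"
  proof (rule injI)
    fix x y assume "Nmat \<pi> *v x = Nmat \<pi> *v y"
    then have "Nmat \<pi> *v (x - y) = 0" by (simp add: matrix_vector_mult_diff_distrib)
    then show "x = y" using ker[of "x - y"] by simp
  qed
  then have "rank (Nmat \<pi>) = CARD('d)" using full_rank_injective by blast
  then have "surj ((*v) (Nmat \<pi>))" using full_rank_surjective by blast
  then have "invertible (Nmat \<pi>)" using injN by (simp add: invertible_eq_bij bij_def)
  then show ?thesis by (simp add: invertible_det_nz)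
qed

definition sol :: "real^'d^'d \<Rightarrow> real^'d \<Rightarrow> real^'d" where
  "sol N y = (\<chi> k. det (\<chi> i j. if j = k then y$i else N$i$j) / det N)"

lemma sol_eq: "det N \<noteq> 0 \<Longrightarrow> N *v sol N y = y"
  using cramer[of N "sol N y" y] by (simp add: sol_def)

lemma sol_unique: "det N \<noteq> 0 \<Longrightarrow> N *v x = y \<Longrightarrow> x = sol N y"
  using cramer[of N x y] by (simp add: sol_def)

lemma sol_add: "det N \<noteq> 0 \<Longrightarrow> sol N (x + y) = sol N x + sol N y"
  by (rule sol_unique[symmetric]) (simp_all add: matrix_vector_right_distrib sol_eq)

lemma sol_scale: "det N \<noteq> 0 \<Longrightarrow> sol N (c *\<^sub>R x) = c *\<^sub>R sol N x"
  by (rule sol_unique[symmetric]) (simp_all add: matrix_vector_mult_scaleR sol_eq)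

definition alpha :: "((real^'k^'k) \<Rightarrow>\<^sub>L (real^'d)) \<Rightarrow> real^'d \<Rightarrow> real^'k^'k" where
  "alpha \<pi> y = (\<chi> a b. blinfun_apply \<pi> (Emat a b) \<bullet> sol (Nmat \<pi>) y)"

lemma pi_alpha: assumes "det (Nmat \<pi>) \<noteq> 0" shows "blinfun_apply \<pi> (alpha \<pi> y) = y"
proof -
  have "blinfun_apply \<pi> (alpha \<pi> y) = Nmat \<pi> *v sol (Nmat \<pi>) y"
    by (subst blin_decomp) (simp add: Nmat_mult alpha_def)
  then show ?thesis using sol_eq[OF assms] by simp
qed

lemma alpha_sym: "\<pi> \<in> Delta U V \<Longrightarrow> transpose (alpha \<pi> y) = alpha \<pi> y"
  by (simp add: vec_eq_iff transpose_def alpha_def; metis Delta_Emat)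

lemma alpha_linear: assumes "det (Nmat \<pi>) \<noteq> 0" shows "linear (alpha \<pi>)"
  by (rule linearI) (simp_all add: vec_eq_iff alpha_def sol_add[OF assms] sol_scale[OF assms] inner_add_right)

lemma subspace_sym: "subspace {X::real^'k^'k. transpose X = X}"
  unfolding subspace_def by (auto simp: vec_eq_iff transpose_def)

lemma alpha_onto:
  fixes \<pi> :: "(real^'k^'k) \<Rightarrow>\<^sub>L (real^'d)"
  assumes D: "\<pi> \<in> Delta U V" and N: "det (Nmat \<pi>) \<noteq> 0"
    and dim_d: "CARD('d) = (CARD('k) + 1) choose 2"
    and X: "transpose X = X"
  shows "alpha \<pi> (blinfun_apply \<pi> X) = (X :: real^'k^'k)"
proof -
  let ?R = "range (alpha \<pi>) :: (real^'k^'k) set"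
  have lin: "linear (alpha \<pi>)" by (rule alpha_linear[OF N])
  have sR: "subspace ?R" unfolding subspace_def
  proof (intro conjI ballI allI)
    show "0 \<in> ?R" using linear_0[OF lin] by (metis rangeI)
    fix x y assume "x \<in> ?R" "y \<in> ?R"
    then obtain a b where "x = alpha \<pi> a" "y = alpha \<pi> b" by blast
    then have "x + y = alpha \<pi> (a + b)" using linear_add[OF lin] by simp
    then show "x + y \<in> ?R" by blast
  next
    fix c x assume "x \<in> ?R"
    then obtain a where "x = alpha \<pi> a" by blast
    then have "c *\<^sub>R x = alpha \<pi> (c *\<^sub>R a)" using linear_scale[OF lin] by simp
    then show "c *\<^sub>R x \<in> ?R" by blast
  qed
  have RS: "?R \<subseteq> {X. transpose X = X}" using alpha_sym[OF D] by auto
  have inj: "inj (alpha \<pi>)" by (metis injI pi_alpha[OF N])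
  have "dim ?R = dim (UNIV :: (real^'d) set)"
    by (rule dim_image_eq[OF lin]) (use inj in \<open>auto intro: inj_on_subset\<close>)
  also have "\<dots> = CARD('d)" by simp
  finally have dR: "dim ?R = CARD('d)" .
  have "?R = {X. transpose X = X}"
    by (rule subspace_dim_equal[OF sR subspace_sym RS]) (use dim_sym dim_d dR in simp)
  then obtain y where "X = alpha \<pi> y" using X by blast
  then show ?thesis using pi_alpha[OF N] by simp
qed


lemma trace_inner_add1: "trace_inner (X + Y) B = trace_inner X B + trace_inner Y B"
  by (simp add: trace_inner_expand algebra_simps sum.distrib)

lemma trace_inner_scale1: "trace_inner (r *\<^sub>R X) B = r * trace_inner X B"
  by (simp add: trace_inner_expand sum_distrib_left mult.assoc)

definition bvec :: "(real^'k^'k)^'q \<Rightarrow> real^'k^'k \<Rightarrow> real^'q" where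
  "bvec B X = (\<chi> j. trace_inner X (B$j))"

lemma bvec_add: "bvec B (X + Y) = bvec B X + bvec B Y"
  by (simp add: vec_eq_iff bvec_def trace_inner_add1)

lemma bvec_scale: "bvec B (r *\<^sub>R X) = r *\<^sub>R bvec B X"
  by (simp add: vec_eq_iff bvec_def trace_inner_scale1)

lemma bvec_linear: "linear (bvec B)"
  by (rule linearI) (simp_all add: bvec_add bvec_scale)

definition Ffun :: "real^'d^'q \<Rightarrow> (real^'k^'k)^'q \<Rightarrow> real^'k^'k \<Rightarrow> real^'d" where
  "Ffun W B X = bvec B X v* W"

lemma vm_scale: "(r *\<^sub>R x) v* (W::real^'d^'q) = r *\<^sub>R (x v* W)"
  by (simp add: vec_eq_iff vector_matrix_mult_def sum_distrib_left mult.assoc)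

lemma Ffun_bl: "bounded_linear (Ffun W B)"
proof -
  have "linear (Ffun W B)"
    by (rule linearI) (simp_all add: Ffun_def bvec_add bvec_scale vector_matrix_left_distrib vm_scale)
  then show ?thesis by (simp add: linear_conv_bounded_linear)
qed

definition Fmap :: "real^'d^'q \<Rightarrow> (((real^'k^'k)^'p) \<times> ((real^'k^'k)^'q)) \<Rightarrow> ((real^'k^'k) \<Rightarrow>\<^sub>L (real^'d))" where
  "Fmap W AB = Blinfun (Ffun W (snd AB))"

lemma Fmap_apply: "blinfun_apply (Fmap W AB) X = Ffun W (snd AB) X"
  by (simp add: Fmap_def bounded_linear_Blinfun_apply[OF Ffun_bl])

definition Gmap :: "real^'d^'p \<Rightarrow> real^'q^'d \<Rightarrow> ((real^'k^'k) \<Rightarrow>\<^sub>L (real^'d)) \<Rightarrow> (((real^'k^'k)^'p) \<times> ((real^'k^'k)^'q))" where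
  "Gmap U V \<pi> = ((\<chi> i. alpha \<pi> (row i U)), Bof V \<pi>)"

lemma col_inner: "column j V \<bullet> y = (y v* V) $ j"
  by (simp add: column_def inner_vec_def vector_matrix_mult_def mult.commute)

lemma row_mult: "row i (U ** V) = row i U v* V"
  by (simp add: vec_eq_iff row_def matrix_matrix_mult_def vector_matrix_mult_def)

lemma trace_inner_transpose1:
  assumes "transpose B = B" shows "trace_inner (transpose X) B = trace_inner X B"
proof -
  have s: "B$a$b = B$b$a" for a b using assms by (metis transpose_def vec_lambda_beta)
  have "trace_inner (transpose X) B = (\<Sum>a\<in>UNIV. \<Sum>b\<in>UNIV. X$b$a * B$b$a)"
    by (simp add: trace_inner_expand transpose_def)
  also have "\<dots> = (\<Sum>b\<in>UNIV. \<Sum>a\<in>UNIV. X$b$a * B$b$a)" by (rule sum.swap)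
  also have "\<dots> = trace_inner X B" by (simp add: trace_inner_expand s)
  finally show ?thesis .
qed

lemma SF_D:
  assumes "(A, B) \<in> SF M"
  shows "\<And>i. psd_matrix (A$i)" "\<And>j. psd_matrix (B$j)" "\<And>i j. M$i$j = trace_inner (A$i) (B$j)"
  using assms by (auto simp: SF_def)

lemma psd_transpose: "psd_matrix X \<Longrightarrow> transpose X = X"
  by (simp add: psd_matrix_def)

lemma bvec_transpose: "(A, B) \<in> SF M \<Longrightarrow> bvec B (transpose X) = bvec B X"
  by (simp add: vec_eq_iff bvec_def trace_inner_transpose1 psd_transpose SF_D(2))

lemma rows_M: assumes "(A, B) \<in> SF M" shows "rows M = bvec B ` range (($) A)"
proof -
  have "row i M = bvec B (A$i)" for i
    using SF_D(3)[OF assms] by (simp add: vec_eq_iff row_def bvec_def)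
  then show ?thesis by (auto simp: rows_def)
qed

lemma span_A:
  fixes M :: "real^'q^'p" and A :: "(real^'k^'k)^'p"
  assumes SF: "(A, B) \<in> SF M" and rk: "rank M = (CARD('k) + 1) choose 2"
  shows "span (range (($) A)) = {X. transpose X = X}"
proof -
  have sub: "range (($) A) \<subseteq> {X. transpose X = X}"
    using SF_D(1)[OF SF] psd_transpose by auto
  have "rank M = dim (bvec B ` range (($) A))" by (simp add: row_rank_def rows_M[OF SF])
  also have "\<dots> \<le> dim (range (($) A))" by (rule dim_image_le[OF bvec_linear])
  finally have "dim {X::real^'k^'k. transpose X = X} \<le> dim (span (range (($) A)))"
    using dim_sym[where 'k='k] rk by simp
  moreover have "span (range (($) A)) \<subseteq> {X. transpose X = X}"
    by (rule span_minimal[OF sub subspace_sym])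
  ultimately show ?thesis
    by (intro subspace_dim_equal subspace_span subspace_sym) auto
qed


lemma bvec_range:
  fixes M :: "real^'q^'p" and A :: "(real^'k^'k)^'p" and U :: "real^'d^'p"
  assumes SF: "(A, B) \<in> SF M" and rk: "rank M = (CARD('k) + 1) choose 2" and MUV: "M = U ** V"
  shows "\<exists>z. bvec B X = z v* V"
proof -
  let ?T = "{y. \<exists>z. y = z v* V}"
  have sT: "subspace ?T" unfolding subspace_def
  proof (intro conjI ballI allI)
    show "0 \<in> ?T" by (auto intro: exI[of _ 0])
    fix x y assume "x \<in> ?T" "y \<in> ?T"
    then obtain a b where "x = a v* V" "y = b v* V" by blast
    then show "x + y \<in> ?T" by (auto intro!: exI[of _ "a + b"] simp: vector_matrix_left_distrib)
  next
    fix c x assume "x \<in> ?T"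
    then obtain a where "x = a v* V" by blast
    then show "c *\<^sub>R x \<in> ?T" by (auto intro!: exI[of _ "c *\<^sub>R a"] simp: vm_scale)
  qed
  have "rows M \<subseteq> ?T" unfolding rows_def MUV row_mult by auto
  then have spT: "span (rows M) \<subseteq> ?T" by (rule span_minimal[OF _ sT])
  define S where "S = (1/2) *\<^sub>R (X + transpose X)"
  have "transpose S = S" by (simp add: S_def vec_eq_iff transpose_def add.commute)
  then have "S \<in> span (range (($) A))" using span_A[OF SF rk] by simp
  then have "bvec B S \<in> bvec B ` span (range (($) A))" by blast
  also have "\<dots> = span (rows M)" by (simp add: rows_M[OF SF] span_linear_image[OF bvec_linear])
  finally have "bvec B S \<in> ?T" using spT by blast
  moreover have "bvec B S = bvec B X"
    by (simp add: S_def bvec_scale bvec_add bvec_transpose[OF SF] scaleR_2[symmetric])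
  ultimately show ?thesis by auto
qed

lemma Ffun_V:
  fixes M :: "real^'q^'p" and A :: "(real^'k^'k)^'p" and U :: "real^'d^'p"
  assumes SF: "(A, B) \<in> SF M" and rk: "rank M = (CARD('k) + 1) choose 2" and MUV: "M = U ** V"
    and VW: "V ** W = mat 1"
  shows "column j V \<bullet> Ffun W B X = trace_inner X (B$j)"
proof -
  obtain z where z: "bvec B X = z v* V" using bvec_range[OF SF rk MUV] by blast
  have "Ffun W B X v* V = bvec B X"
    unfolding Ffun_def z by (simp add: vector_matrix_mul_assoc VW matrix_mul_assoc[symmetric])
  then show ?thesis by (simp add: col_inner bvec_def)
qed

lemma Ffun_A:
  assumes SF: "(A, B) \<in> SF M" and MUV: "M = U ** V" and VW: "V ** W = mat 1"
  shows "Ffun W B (A$i) = row i U"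
proof -
  have "bvec B (A$i) = row i M"
    using SF_D(3)[OF SF] by (simp add: vec_eq_iff row_def bvec_def)
  then show ?thesis by (simp add: Ffun_def MUV row_mult vector_matrix_mul_assoc VW)
qed

lemma psd_add: "psd_matrix X \<Longrightarrow> psd_matrix Y \<Longrightarrow> psd_matrix (X + Y)"
  unfolding psd_matrix_def
  by (auto simp: matrix_vector_mult_add_rdistrib inner_add_right vec_eq_iff transpose_def
           intro: add_nonneg_nonneg)

lemma psd_scale: "psd_matrix X \<Longrightarrow> 0 \<le> c \<Longrightarrow> psd_matrix (c *\<^sub>R X)"
  unfolding psd_matrix_def
  by (auto simp: scaleR_mv vec_eq_iff transpose_def)

lemma psd_zero: "psd_matrix 0"
  by (simp add: psd_matrix_def vec_eq_iff transpose_def)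

lemma psd_sum: "finite S \<Longrightarrow> (\<And>i. i \<in> S \<Longrightarrow> psd_matrix (f i)) \<Longrightarrow> psd_matrix (sum f S)"
  by (induction S rule: finite_induct) (auto intro: psd_add psd_zero)


lemma Fmap_Delta:
  fixes M :: "real^'q^'p" and A :: "(real^'k^'k)^'p" and U :: "real^'d^'p"
  assumes SF: "(A, B) \<in> SF M" and rk: "rank M = (CARD('k) + 1) choose 2" and MUV: "M = U ** V"
    and VW: "V ** W = mat 1"
  shows "Fmap W (A, B) \<in> Delta U V"
  unfolding Delta_def
proof (intro CollectI conjI allI subsetI)
  fix X show "blinfun_apply (Fmap W (A, B)) (transpose X) = blinfun_apply (Fmap W (A, B)) X"
    by (simp add: Fmap_apply Ffun_def bvec_transpose[OF SF])
next
  fix x assume "x \<in> cone_P U"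
  then obtain c where c: "\<forall>i. 0 \<le> c i" "x = (\<Sum>i\<in>UNIV. c i *\<^sub>R row i U)" by (auto simp: cone_P_def)
  let ?Y = "\<Sum>i\<in>UNIV. c i *\<^sub>R A$i"
  have "psd_matrix ?Y" using c(1) SF_D(1)[OF SF] by (auto intro!: psd_sum psd_scale)
  moreover have "blinfun_apply (Fmap W (A, B)) ?Y = x"
    by (simp add: c(2) blinfun.sum_right blinfun.scaleR_right Fmap_apply Ffun_A[OF SF MUV VW])
  ultimately show "x \<in> blinfun_apply (Fmap W (A, B)) ` {X. psd_matrix X}" by force
next
  fix x assume "x \<in> blinfun_apply (Fmap W (A, B)) ` {X. psd_matrix X}"
  then obtain X where X: "psd_matrix X" "x = blinfun_apply (Fmap W (A, B)) X" by blast
  show "x \<in> cone_Q V" unfolding cone_Q_def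
    using X Ffun_V[OF SF rk MUV VW] psd_trace_nonneg[OF X(1) SF_D(2)[OF SF]] by (simp add: Fmap_apply)
qed

lemma mult_row_col: "(U ** V) $ i $ j = column j V \<bullet> row i U"
  by (simp add: matrix_matrix_mult_def inner_vec_def row_def column_def mult.commute)

lemma Gmap_SF:
  fixes \<pi> :: "(real^'k^'k) \<Rightarrow>\<^sub>L (real^'d)" and U :: "real^'d^'p" and V :: "real^'q^'d"
  assumes D: "\<pi> \<in> Delta U V" and injU: "inj ((*v) U)"
    and dim_d: "CARD('d) = (CARD('k) + 1) choose 2"
  shows "Gmap U V \<pi> \<in> SF (U ** V)"
proof -
  have N: "det (Nmat \<pi>) \<noteq> 0" by (rule Nmat_det[OF D injU])
  have Ai: "psd_matrix (alpha \<pi> (row i U))" for i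
  proof -
    obtain X where X: "psd_matrix X" "row i U = blinfun_apply \<pi> X" using Delta_row[OF D] by metis
    then show ?thesis using alpha_onto[OF D N dim_d psd_transpose[OF X(1)]] by simp
  qed
  show ?thesis unfolding SF_def Gmap_def
    using Ai psd_Bof[OF D] by (simp add: trace_Bof pi_alpha[OF N] mult_row_col)
qed

lemma FG: assumes VW: "V ** W = mat 1" shows "Fmap W (Gmap U V \<pi>) = \<pi>"
proof (rule blinfun_eqI)
  fix X
  have "bvec (Bof V \<pi>) X = blinfun_apply \<pi> X v* V"
    by (simp add: vec_eq_iff bvec_def trace_Bof col_inner)
  then show "blinfun_apply (Fmap W (Gmap U V \<pi>)) X = blinfun_apply \<pi> X"
    by (simp add: Fmap_apply Gmap_def Ffun_def vector_matrix_mul_assoc VW)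
qed

lemma GF:
  fixes M :: "real^'q^'p" and A :: "(real^'k^'k)^'p" and U :: "real^'d^'p"
  assumes SF: "(A, B) \<in> SF M" and rk: "rank M = (CARD('k) + 1) choose 2" and MUV: "M = U ** V"
    and VW: "V ** W = mat 1" and injU: "inj ((*v) U)"
    and dim_d: "CARD('d) = (CARD('k) + 1) choose 2"
  shows "Gmap U V (Fmap W (A, B)) = (A, B)"
proof -
  let ?\<pi> = "Fmap W (A, B)"
  have D: "?\<pi> \<in> Delta U V" by (rule Fmap_Delta[OF SF rk MUV VW])
  have N: "det (Nmat ?\<pi>) \<noteq> 0" by (rule Nmat_det[OF D injU])
  have "Bof V ?\<pi> = B"
    by (simp add: vec_eq_iff Bof_def Fmap_apply Ffun_V[OF SF rk MUV VW] trace_inner_Emat)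
  moreover have "alpha ?\<pi> (row i U) = A$i" for i
  proof -
    have "row i U = blinfun_apply ?\<pi> (A$i)" by (simp add: Fmap_apply Ffun_A[OF SF MUV VW])
    then show ?thesis using alpha_onto[OF D N dim_d psd_transpose[OF SF_D(1)[OF SF]]] by simp
  qed
  ultimately show ?thesis by (simp add: Gmap_def vec_eq_iff)
qed


lemma cont_det: "continuous_on S f \<Longrightarrow> continuous_on S (\<lambda>x. det (f x :: real^'n^'n))"
  unfolding det_def by (intro continuous_intros)

lemma cont_app: "continuous_on S (\<lambda>\<pi>. blinfun_apply \<pi> c)"
  by (rule bounded_linear.continuous_on[OF blinfun.bounded_linear_left continuous_on_id])

lemma cont_if_const: "continuous_on S f \<Longrightarrow> continuous_on S g \<Longrightarrow> continuous_on S (\<lambda>x. if P then f x else g x)"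
  by (cases P) auto

lemma cont_Fmap:
  fixes S :: "(((real^'k^'k)^'p) \<times> ((real^'k^'k)^'q)) set" and W :: "real^'d^'q"
  shows "continuous_on S (Fmap W)"
proof (rule continuous_on_blinfun_componentwise)
  fix i :: "real^'k^'k"
  have eq: "(\<lambda>x. blinfun_apply (Fmap W x) i) = (\<lambda>x. Ffun W (snd x) i)" by (simp add: Fmap_apply fun_eq_iff)
  have c: "continuous_on S (\<lambda>x. Ffun W (snd x) i)"
    unfolding Ffun_def bvec_def vector_matrix_mult_def trace_inner_expand
    by (intro continuous_intros)
  show "continuous_on S (\<lambda>x. blinfun_apply (Fmap W x) i)" by (subst eq) (rule c)
qed

lemma cont_Nmat: "continuous_on S Nmat"
  unfolding Nmat_def by (intro continuous_intros cont_app)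

lemma cont_Gmap:
  fixes U :: "real^'d^'p" and V :: "real^'q^'d"
  assumes injU: "inj ((*v) U)"
  shows "continuous_on (Delta U V :: ((real^'k^'k) \<Rightarrow>\<^sub>L (real^'d)) set) (Gmap U V)"
proof -
  have N: "\<forall>\<pi>\<in>Delta U V. det (Nmat (\<pi> :: (real^'k^'k) \<Rightarrow>\<^sub>L (real^'d))) \<noteq> 0"
    using Nmat_det[OF _ injU] by blast
  show ?thesis
    unfolding Gmap_def alpha_def sol_def Bof_def
    by (intro continuous_intros cont_app cont_det cont_Nmat cont_if_const) (use N in auto)
qed


lemma inv_props: assumes "invertible L" shows "L ** matrix_inv L = mat 1" "matrix_inv L ** L = mat 1"
proof -
  have "\<exists>L'. L ** L' = mat 1 \<and> L' ** L = mat 1" using assms by (simp add: invertible_def)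
  then have "L ** matrix_inv L = mat 1 \<and> matrix_inv L ** L = mat 1"
    unfolding matrix_inv_def by (rule someI_ex)
  then show "L ** matrix_inv L = mat 1" "matrix_inv L ** L = mat 1" by auto
qed

lemma inv_unique: assumes "A ** B = mat 1" "B ** A = mat 1" shows "matrix_inv A = B"
proof -
  have inv: "invertible A" using assms by (auto simp: invertible_def)
  have "matrix_inv A = matrix_inv A ** (A ** B)" by (simp add: assms)
  also have "\<dots> = (matrix_inv A ** A) ** B" by (simp add: matrix_mul_assoc)
  also have "\<dots> = B" by (simp add: inv_props[OF inv])
  finally show ?thesis .
qed

lemma trace_congr: "trace_inner X (P ** B ** transpose P) = trace_inner (transpose P ** X ** P) (B::real^'k^'k)"
proof -
  have "trace_inner X (P ** B ** transpose P) = trace ((X ** P ** B) ** transpose P)"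
    by (simp add: trace_inner_def matrix_mul_assoc)
  also have "\<dots> = trace (transpose P ** (X ** P ** B))" by (rule trace_mul_sym)
  also have "\<dots> = trace_inner (transpose P ** X ** P) B"
    by (simp add: trace_inner_def matrix_mul_assoc)
  finally show ?thesis .
qed

lemma inner_transpose_mv: "x \<bullet> (transpose L *v z) = (L *v x) \<bullet> (z::real^'n)"
  by (simp add: dot_lmul_matrix[symmetric] inner_commute)

lemma psd_congr: assumes "psd_matrix B" shows "psd_matrix (P ** B ** transpose P)"
  unfolding psd_matrix_def
proof
  show "transpose (P ** B ** transpose P) = P ** B ** transpose P"
    using psd_transpose[OF assms] by (simp add: matrix_transpose_mul matrix_mul_assoc)
  show "\<forall>x. 0 \<le> x \<bullet> ((P ** B ** transpose P) *v x)"
  proof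
    fix x
    have "x \<bullet> ((P ** B ** transpose P) *v x) = (transpose P *v x) \<bullet> (B *v (transpose P *v x))"
      using inner_transpose_mv[of x "transpose P" "B *v (transpose P *v x)"]
      by (simp add: matrix_vector_mul_assoc[symmetric] del: transpose_matrix_vector)
    then show "0 \<le> x \<bullet> ((P ** B ** transpose P) *v x)" using assms by (simp add: psd_matrix_def)
  qed
qed

lemma GL_SF: assumes L: "invertible L" and x: "x \<in> SF M" shows "GL_act_SF L x \<in> SF M"
proof -
  obtain A B where AB: "x = (A, B)" by fastforce
  have S: "(A, B) \<in> SF M" using x AB by simp
  have LP: "L ** matrix_inv L = mat 1" by (rule inv_props(1)[OF L])
  have 1: "psd_matrix (transpose L ** A$i ** L)" for i
    using psd_congr[OF SF_D(1)[OF S], of "transpose L" i] by simp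
  have 2: "psd_matrix (matrix_inv L ** B$j ** transpose (matrix_inv L))" for j
    by (rule psd_congr[OF SF_D(2)[OF S]])
  have 3: "trace_inner (transpose L ** A$i ** L) (matrix_inv L ** B$j ** transpose (matrix_inv L)) = M$i$j" for i j
  proof -
    let ?P = "matrix_inv L"
    have e1: "trace_inner (transpose L ** A$i ** L) (?P ** B$j ** transpose ?P)
        = trace_inner (transpose ?P ** (transpose L ** A$i ** L) ** ?P) (B$j)"
      by (rule trace_congr)
    have e2: "transpose ?P ** (transpose L ** A$i ** L) ** ?P = transpose (L ** ?P) ** A$i ** (L ** ?P)"
      by (simp only: matrix_transpose_mul matrix_mul_assoc)
    have e3: "transpose (L ** ?P) ** A$i ** (L ** ?P) = A$i" by (simp add: LP)
    show ?thesis using e1 e2 e3 SF_D(3)[OF S] by simp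
  qed
  show ?thesis unfolding AB GL_act_SF_def SF_def using 1 2 3 by simp
qed

lemma Fmap_GL: "blinfun_apply (Fmap W (GL_act_SF L x)) X
   = blinfun_apply (Fmap W x) (transpose (matrix_inv L) ** X ** transpose (transpose (matrix_inv L)))"
  by (simp add: Fmap_apply Ffun_def bvec_def GL_act_SF_def trace_congr)


lemma orbit_iff:
  fixes M :: "real^'q^'p" and U :: "real^'d^'p" and V :: "real^'q^'d"
    and x y :: "((real^'k^'k)^'p) \<times> ((real^'k^'k)^'q)"
  assumes rk: "rank M = (CARD('k) + 1) choose 2" and MUV: "M = U ** V"
    and VW: "V ** W = mat 1" and injU: "inj ((*v) U)"
    and dim_d: "CARD('d) = (CARD('k) + 1) choose 2"
    and x: "x \<in> SF M" and y: "y \<in> SF M"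
  shows "(x, y) \<in> SF_orbit_rel M \<longleftrightarrow> (Fmap W x, Fmap W y) \<in> Delta_orbit_rel U V"
proof -
  have Dl: "Fmap W z \<in> Delta U V" if "z \<in> SF M" for z :: "((real^'k^'k)^'p) \<times> ((real^'k^'k)^'q)"
    using Fmap_Delta[OF _ rk MUV VW, of "fst z" "snd z"] that by simp
  have GFz: "Gmap U V (Fmap W z) = z" if "z \<in> SF M" for z :: "((real^'k^'k)^'p) \<times> ((real^'k^'k)^'q)"
    using GF[OF _ rk MUV VW injU dim_d, of "fst z" "snd z"] that by simp
  show ?thesis
  proof
    assume "(x, y) \<in> SF_orbit_rel M"
    then obtain L where L: "invertible L" "y = GL_act_SF L x" by (auto simp: SF_orbit_rel_def)
    let ?g = "transpose (matrix_inv L)"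
    have "?g ** transpose L = mat 1" "transpose L ** ?g = mat 1"
      using inv_props[OF L(1)] by (simp_all add: matrix_transpose_mul[symmetric])
    then have ig: "invertible ?g" by (auto simp: invertible_def)
    have eqX: "\<forall>X. blinfun_apply (Fmap W y) X = blinfun_apply (Fmap W x) (?g ** X ** transpose ?g)"
      unfolding L(2) by (intro allI, rule Fmap_GL)
    have ex: "\<exists>g. invertible g \<and> (\<forall>X. blinfun_apply (Fmap W y) X = blinfun_apply (Fmap W x) (g ** X ** transpose g))"
      by (rule exI[of _ ?g], rule conjI[OF ig eqX])
    show "(Fmap W x, Fmap W y) \<in> Delta_orbit_rel U V"
      unfolding Delta_orbit_rel_def using Dl[OF x] Dl[OF y] ex by (simp only: mem_Collect_eq case_prod_conv simp_thms)
  next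
    assume "(Fmap W x, Fmap W y) \<in> Delta_orbit_rel U V"
    then obtain g where g: "invertible g"
      "\<And>X. blinfun_apply (Fmap W y) X = blinfun_apply (Fmap W x) (g ** X ** transpose g)"
      by (auto simp: Delta_orbit_rel_def)
    let ?L = "transpose (matrix_inv g)"
    have c1: "?L ** transpose g = mat 1" "transpose g ** ?L = mat 1"
      using inv_props[OF g(1)] by (simp_all add: matrix_transpose_mul[symmetric])
    then have iL: "invertible ?L" by (auto simp: invertible_def)
    have mi: "matrix_inv ?L = transpose g" by (rule inv_unique[OF c1])
    have "Fmap W (GL_act_SF ?L x) = Fmap W y"
    proof (rule blinfun_eqI)
      fix X
      show "blinfun_apply (Fmap W (GL_act_SF ?L x)) X = blinfun_apply (Fmap W y) X"
        using Fmap_GL[of W ?L x X] g(2)[of X] mi by simp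
    qed
    then have "GL_act_SF ?L x = y"
      using GFz[OF GL_SF[OF iL x]] GFz[OF y] by metis
    then show "(x, y) \<in> SF_orbit_rel M"
      unfolding SF_orbit_rel_def using x y iL by blast
  qed
qed

theorem corollary7p4:
  fixes M :: "real^'q^'p" and U :: "real^'d^'p" and V :: "real^'q^'d"
  assumes nonneg: "\<forall>i j. 0 \<le> M $ i $ j"
    and dim_d: "CARD('d) = (CARD('k) + 1) choose 2"
    and rank_M: "rank M = CARD('d)"
    and psd_rank_M: "psd_rank M = CARD('k)"
    and fact: "M = U ** V"
  shows "(SF_quotient M :: (((real^'k^'k)^'p) \<times> ((real^'k^'k)^'q)) set topology)
           homeomorphic_space (Delta_quotient U V :: ((real^'k^'k) \<Rightarrow>\<^sub>L (real^'d)) set topology)"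
proof -
  have rU: "rank U = CARD('d)"
    using rank_mul_le_left[of U V] rank_bound[of U] rank_M fact by simp
  have rV: "rank V = CARD('d)"
    using rank_mul_le_right[of U V] rank_bound[of V] rank_M fact by simp
  have injU: "inj ((*v) U)" using rU full_rank_injective by blast
  have "surj ((*v) V)" using rV full_rank_surjective by blast
  then obtain W where VW: "V ** W = mat 1" using matrix_right_invertible_surjective by blast
  have rk: "rank M = (CARD('k) + 1) choose 2" using rank_M dim_d by simp
  let ?X = "subtopology euclidean (SF M :: (((real^'k^'k)^'p) \<times> ((real^'k^'k)^'q)) set)"
  let ?Y = "subtopology euclidean (Delta U V :: ((real^'k^'k) \<Rightarrow>\<^sub>L (real^'d)) set)"
  have hm: "homeomorphic_maps ?X ?Y (Fmap W) (Gmap U V)"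
    unfolding homeomorphic_maps_def
  proof (intro conjI)
    show "continuous_map ?X ?Y (Fmap W)"
      using Fmap_Delta[OF _ rk fact VW] cont_Fmap by (auto simp: Pi_iff)
    show "continuous_map ?Y ?X (Gmap U V)"
      using Gmap_SF[OF _ injU dim_d] cont_Gmap[OF injU] fact by (auto simp: Pi_iff)
    show "\<forall>x\<in>topspace ?X. Gmap U V (Fmap W x) = x"
      using GF[OF _ rk fact VW injU dim_d] by auto
    show "\<forall>y\<in>topspace ?Y. Fmap W (Gmap U V y) = y"
      using FG[OF VW] by auto
  qed
  have r: "SF_orbit_rel M \<subseteq> topspace ?X \<times> topspace ?X" by (auto simp: SF_orbit_rel_def)
  have s: "Delta_orbit_rel U V \<subseteq> topspace ?Y \<times> topspace ?Y" by (auto simp: Delta_orbit_rel_def)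
  have iff: "\<forall>x\<in>topspace ?X. \<forall>x'\<in>topspace ?X. (x,x') \<in> SF_orbit_rel M \<longleftrightarrow> (Fmap W x, Fmap W x') \<in> Delta_orbit_rel U V"
    using orbit_iff[OF rk fact VW injU dim_d] by auto
  show ?thesis unfolding SF_quotient_def Delta_quotient_def
    by (rule quot_homeo[OF hm r s iff])
qed


end
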